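(* Consider the FlexPD-C iterates described in the context with integer $T\ge1$, let $C=\sum_{t=0}^{T-1}(I-\alpha B)^t$, $M=C^{-1}(I-\alpha B)^T$, $z^k=\begin{bmatrix}x^k\\ \lambda^k\end{bmatrix}$, $z^*=\begin{bmatrix}x^*\\ \lambda^*\end{bmatrix}$ and $\mathcal G_C=\begin{bmatrix}M&0\\0&\frac{\alpha}{\beta}I\end{bmatrix}$. Let $0<\eta_4<2m$. If \[0<\beta<\frac{2m-\eta_4}{\rho(A'A)}\quad\text{and}\quad 0<\alpha<\frac{1-\Big(\frac{L^2}{L^2+\eta_4\rho(B)}\Big)^{1/T}}{\rho(B)},\] then there exists $\delta_C>0$ such that for all $k\ge0$, \[\|z^{k+1}-z^*\|_{\mathcal G_C}^2\le\frac{1}{1+\delta_C}\|z^k-z^*\|_{\mathcal G_C}^2,\] that is, $\|z^k-z^*\|_{\mathcal G_C}$ converges Q-linearly to $0$ and consequently $\|x^k-x^*\|_M$ converges R-linearly to $0$.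
   Context: Setting: $n$ agents are connected by a connected undirected graph with edge set $\mathcal E$, $\epsilon=|\mathcal E|$. For $x\in\mathbb R^n$ let $f(x)=\sum_{i=1}^n f_i(x_i)$, where each $f_i:\mathbb R\to\mathbb R$ is twice differentiable with $m\le f_i''\le L$ for constants $0<m\le L$; $\nabla f(x)=(f_1'(x_1),\dots,f_n'(x_n))'$. $A\in\mathbb R^{\epsilon\times n}$ is the edge–node incidence matrix (null space spanned by the all-ones vector). $B\in\mathbb R^{n\times n}$ is symmetric positive semidefinite with the same null space as $A$ (so $B\neq0$), off-diagonal entries nonzero only on edges. $x^*$ is the unique minimizer of $f$ subject to $Ax=0$ and $\lambda^*$ a Lagrange multiplier with $\nabla f(x^* )+A'\lambda^*=0$, $Ax^*=0$, $Bx^*=0$, chosen in the column space of $A$. FlexPD-C: given $\alpha,\beta>0$, $T\ge1$, $x^0$ arbitrary, $\lambda^0=0$; for $k\ge0$: $x^{k+1,0}=x^k$; for $t=1,\dots,T$, $x^{k+1,t}=x^{k+1,t-1}-\alpha\nabla f(x^k)-\alpha A'\lambda^k-\alpha Bx^{k+1,t-1}$; then $x^{k+1}=x^{k+1,T}$, $\lambda^{k+1}=\lambda^k+\beta Ax^{k+1}$. Notation: $\rho(S)$ largest eigenvalue of symmetric $S$; $\|v\|_S^2=v'Sv$; $\|\cdot\|$ Euclidean norm. *)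

theory Defs
  imports "HOL-Analysis.Analysis"
begin

text \<open>Matrix powers of a square matrix.\<close>
fun matpow :: "real^'n^'n \<Rightarrow> nat \<Rightarrow> real^'n^'n" where
  "matpow S 0 = mat 1"
| "matpow S (Suc t) = matpow S t ** S"

text \<open>Largest eigenvalue of a (symmetric) matrix.\<close>
definition rho :: "real^'n^'n \<Rightarrow> real" where
  "rho S = Max {c. \<exists>v. v \<noteq> 0 \<and> S *v v = c *\<^sub>R v}"

text \<open>Edge-node incidence matrix of an undirected simple graph with edge set 'e
  and node set 'n: every row has exactly one entry 1 and one entry -1 (at the two
  distinct endpoints of the edge, arbitrary orientation), zero elsewhere, and
  distinct rows correspond to distinct edges.\<close>
definition incidence_matrix :: "real^'n^'e \<Rightarrow> bool" where
  "incidence_matrix A \<longleftrightarrow>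
     (\<forall>e. \<exists>i j. i \<noteq> j \<and> A$e$i = 1 \<and> A$e$j = -1 \<and> (\<forall>k. k \<noteq> i \<and> k \<noteq> j \<longrightarrow> A$e$k = 0))
     \<and> inj (\<lambda>e. {i. A$e$i \<noteq> 0})"

definition adjacent :: "real^'n^'e \<Rightarrow> 'n \<Rightarrow> 'n \<Rightarrow> bool" where
  "adjacent A i j \<longleftrightarrow> i \<noteq> j \<and> (\<exists>e. A$e$i \<noteq> 0 \<and> A$e$j \<noteq> 0)"

definition graph_connected :: "real^'n^'e \<Rightarrow> bool" where
  "graph_connected A \<longleftrightarrow> (\<forall>i j. (i, j) \<in> {(a, b). adjacent A a b}\<^sup>*)"

text \<open>Gradient of the separable function f(x) = sum_i f_i(x_i), given the
  derivatives df i of the f_i.\<close>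
definition grad :: "('n \<Rightarrow> real \<Rightarrow> real) \<Rightarrow> real^'n \<Rightarrow> real^'n" where
  "grad df x = (\<chi> i. df i (x$i))"

text \<open>FlexPD-C inner loop: x^{k+1,t}.\<close>
fun flex_inner :: "real \<Rightarrow> real^'n^'e \<Rightarrow> real^'n^'n \<Rightarrow> ('n \<Rightarrow> real \<Rightarrow> real)
     \<Rightarrow> real^'n \<Rightarrow> real^'e \<Rightarrow> nat \<Rightarrow> real^'n" where
  "flex_inner \<alpha> A B df xk lk 0 = xk"
| "flex_inner \<alpha> A B df xk lk (Suc t) =
     flex_inner \<alpha> A B df xk lk t - \<alpha> *\<^sub>R grad df xk - \<alpha> *\<^sub>R (transpose A *v lk)
       - \<alpha> *\<^sub>R (B *v flex_inner \<alpha> A B df xk lk t)"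

text \<open>C = sum_{t<T} (I - alpha B)^t and M = C^{-1} (I - alpha B)^T.\<close>
definition Cmat :: "real \<Rightarrow> real^'n^'n \<Rightarrow> nat \<Rightarrow> real^'n^'n" where
  "Cmat \<alpha> B T = (\<Sum>t<T. matpow (mat 1 - \<alpha> *\<^sub>R B) t)"

definition Mmat :: "real \<Rightarrow> real^'n^'n \<Rightarrow> nat \<Rightarrow> real^'n^'n" where
  "Mmat \<alpha> B T = matrix_inv (Cmat \<alpha> B T) ** matpow (mat 1 - \<alpha> *\<^sub>R B) T"

text \<open>Squared G_C-norm of z = (x, l), with G_C = diag(M, (alpha/beta) I).\<close>
definition GC_normsq :: "real \<Rightarrow> real \<Rightarrow> real^'n^'n \<Rightarrow> nat \<Rightarrow> real^'n \<Rightarrow> real^'e \<Rightarrow> real" where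
  "GC_normsq \<alpha> \<beta> B T x l = x \<bullet> (Mmat \<alpha> B T *v x) + (\<alpha> / \<beta>) * (l \<bullet> l)"

end

theory Submission
  imports Defs
begin


lemma scalar_key:
  fixes \<alpha> \<rho> L \<eta> b :: real and T :: nat
  assumes a0: "0<\<alpha>" and r0: "0<\<rho>" and L0: "0<L" and e0: "0<\<eta>" and T1: "1\<le>T"
    and b0: "0\<le>b" and bR: "b\<le>\<rho>"
    and ab: "\<alpha> < (1 - (L\<^sup>2/(L\<^sup>2+\<eta>*\<rho>)) powr (1/real T))/\<rho>"
  shows "\<alpha>*L\<^sup>2/\<eta> < (1-\<alpha>*b)^T / (\<Sum>t<T. (1-\<alpha>*b)^t)"
proof -
  define r where "r = L\<^sup>2/(L\<^sup>2+\<eta>*\<rho>)"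
  have L2: "0 < L\<^sup>2" using L0 by simp
  have r0': "0 < r" unfolding r_def using L2 e0 r0 by (simp add: add_pos_pos)
  have r1: "r < 1"
  proof -
    have "0 < \<eta>*\<rho>" using e0 r0 by simp
    then have "L\<^sup>2 < L\<^sup>2+\<eta>*\<rho>" "0 < L\<^sup>2+\<eta>*\<rho>" using L2 by linarith+
    then show ?thesis unfolding r_def by (simp only: divide_less_eq_1) simp
  qed
  define s where "s = r powr (1/real T)"
  have s0: "0 < s" unfolding s_def using r0' by simp
  have sT: "s^T = r"
  proof -
    have "s^T = s powr real T" using s0 by (simp add: powr_realpow)
    also have "\<dots> = r powr (1/real T * real T)" unfolding s_def by (simp add: powr_powr)
    also have "\<dots> = r" using T1 r0' by simp
    finally show ?thesis .
  qed
  have s1: "s < 1" unfolding s_def using powr_less_mono2[of "1/real T" r 1] r0' r1 T1 by simp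
  have aR: "\<alpha>*\<rho> < 1 - s" using ab r0 unfolding s_def r_def by (simp add: field_simps)
  define a where "a = 1 - \<alpha>*\<rho>"
  have as: "s < a" using aR unfolding a_def by simp
  have a1: "a < 1" unfolding a_def using a0 r0 by simp
  define w where "w = 1 - \<alpha>*b"
  have wa: "a \<le> w" unfolding a_def w_def using bR a0 by (simp add: mult_left_mono)
  have w0: "0 < w" using wa as s0 by simp
  have w1: "w \<le> 1" unfolding w_def using a0 b0 by simp
  define c where "c = (\<Sum>t<T. w^t)"
  have c1: "1 \<le> c"
  proof -
    have "(\<Sum>t<T. w^t) = w^0 + (\<Sum>t<T-1. w^(Suc t))"
      using T1 sum.lessThan_Suc_shift[of "\<lambda>t. w^t" "T-1"] by simp
    moreover have "0 \<le> (\<Sum>t<T-1. w^(Suc t))" using w0 by (simp add: sum_nonneg)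
    ultimately show ?thesis unfolding c_def by simp
  qed
  have tele: "\<alpha>*b*c = 1 - w^T"
    unfolding c_def using one_diff_power_eq[of w T] by (simp add: w_def)
  show ?thesis
  proof (cases "b = 0")
    case True
    then have wT: "w = 1" "c = real T" unfolding w_def c_def by simp_all
    have "1 + real T * (1/s - 1) \<le> (1 + (1/s - 1))^T"
      by (rule Bernoulli_inequality) (use s0 in simp)
    also have "\<dots> = 1/r" using sT s0 by (simp add: power_divide)
    also have "1/r = 1 + \<eta>*\<rho>/L\<^sup>2" unfolding r_def using L2 by (simp add: field_simps)
    finally have "real T * (1/s - 1) \<le> \<eta>*\<rho>/L\<^sup>2" by simp
    moreover have "1 - s \<le> 1/s - 1"
    proof -
      have "(1-s) * s \<le> 1 - s" using s0 s1 by (simp add: mult_left_le)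
      then show ?thesis using s0 by (simp add: field_simps)
    qed
    ultimately have "real T * (1 - s) \<le> \<eta>*\<rho>/L\<^sup>2"
      by (meson order_trans mult_left_mono of_nat_0_le_iff)
    moreover have "real T * (\<alpha>*\<rho>) < real T * (1 - s)" using aR T1 by simp
    ultimately have "real T * \<alpha> * \<rho> < \<eta>*\<rho>/L\<^sup>2" by simp
    then have "real T * \<alpha> * L\<^sup>2 * \<rho> < \<eta> * \<rho>" using L2 by (simp add: field_simps)
    then have "real T * \<alpha> * L\<^sup>2 < \<eta>" using r0 by simp
    then have "\<alpha>*L\<^sup>2/\<eta> < 1/real T" using T1 e0 by (simp add: divide_less_eq less_divide_eq mult_ac)
    then show ?thesis using wT unfolding c_def[symmetric] w_def[symmetric] by simp
  next
    case False
    then have bp: "0 < b" using b0 by simp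
    define \<theta> where "\<theta> = b/\<rho>"
    have th0: "0 < \<theta>" and th1: "\<theta> \<le> 1" unfolding \<theta>_def using bp bR r0 by simp_all
    have "a powr \<theta> * 1 powr (1-\<theta>) \<le> \<theta>*a + (1-\<theta>)*1"
      by (rule Youngs_inequality_0) (use th0 th1 as s0 in auto)
    also have "\<theta>*a + (1-\<theta>)*1 = w" unfolding \<theta>_def a_def w_def using r0 by (simp add: field_simps)
    finally have wge: "a powr \<theta> \<le> w" by simp
    have "s powr \<theta> < a powr \<theta>" using s0 as th0 by (simp add: powr_less_mono2)
    then have "s powr \<theta> < w" using wge by simp
    then have "(s powr \<theta>)^T < w^T" using T1 s0
      by (intro power_strict_mono) auto
    moreover have "(s powr \<theta>)^T = r powr \<theta>"
    proof -
      have "(s powr \<theta>)^T = (s powr \<theta>) powr real T" using s0 by (simp add: powr_realpow)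
      also have "\<dots> = r powr (1/real T * \<theta> * real T)" unfolding s_def by (simp add: powr_powr)
      also have "\<dots> = r powr \<theta>" using T1 by simp
      finally show ?thesis .
    qed
    ultimately have wT: "r powr \<theta> < w^T" by simp
    have "(1/r) powr \<theta> * 1 powr (1-\<theta>) \<le> \<theta>*(1/r) + (1-\<theta>)*1"
      by (rule Youngs_inequality_0) (use th0 th1 r0' in auto)
    also have "\<theta>*(1/r) + (1-\<theta>)*1 = (L\<^sup>2 + \<eta>*b)/L\<^sup>2"
      unfolding \<theta>_def r_def using r0 L2 by (simp add: field_simps)
    finally have "(1/r) powr \<theta> \<le> (L\<^sup>2 + \<eta>*b)/L\<^sup>2" by simp
    then have Lb: "L\<^sup>2 * (1/r) powr \<theta> \<le> L\<^sup>2 + \<eta>*b" using L2 by (simp add: field_simps)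
    have "L\<^sup>2 = L\<^sup>2 * (r powr \<theta> * (1/r) powr \<theta>)" using r0'
      by (simp add: powr_divide)
    also have "\<dots> = (r powr \<theta>) * (L\<^sup>2 * (1/r) powr \<theta>)" by simp
    also have "\<dots> < w^T * (L\<^sup>2 + \<eta>*b)"
      using wT Lb r0' L2 by (intro mult_less_le_imp_less) auto
    finally have key: "L\<^sup>2 < w^T * (L\<^sup>2 + \<eta>*b)" .
    have c0: "0 < c" using c1 by simp
    have "L\<^sup>2*(1-w^T) < \<eta>*b*w^T" using key by (simp add: algebra_simps)
    then have "\<alpha>*(L\<^sup>2*(1-w^T)) < \<alpha>*(\<eta>*b*w^T)" using a0 by simp
    moreover have "\<alpha>*L\<^sup>2*(\<alpha>*b*c) = \<alpha>*(L\<^sup>2*(1-w^T))" by (simp add: tele)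
    ultimately have "\<alpha>*L\<^sup>2*(\<alpha>*b*c) < \<eta>*w^T*(\<alpha>*b)" by (simp add: algebra_simps)
    then have "(\<alpha>*L\<^sup>2*c)*(\<alpha>*b) < (\<eta>*w^T)*(\<alpha>*b)" by (simp only: mult_ac)
    then have "\<alpha>*L\<^sup>2*c < \<eta>*w^T" by (rule mult_right_less_imp_less) (use a0 bp in simp)
    then have "\<alpha>*L\<^sup>2/\<eta> < w^T/c" using c0 e0 by (simp add: divide_less_eq less_divide_eq mult_ac)
    then show ?thesis unfolding c_def w_def .
  qed
qed

lemma sym_inner:
  fixes S :: "real^'n^'n"
  assumes "transpose S = S"
  shows "(S *v x) \<bullet> y = x \<bullet> (S *v y)"
  by (metis assms dot_lmul_matrix vector_transpose_matrix)

lemma eig_extend: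
  fixes S :: "real^'n^'n"
  assumes sym: "transpose S = S" and E: "\<forall>e\<in>E. \<exists>c. S *v e = c *\<^sub>R e"
    and ne: "span E \<noteq> UNIV"
  shows "\<exists>v. norm v = 1 \<and> (\<forall>e\<in>E. v \<bullet> e = 0) \<and> (\<exists>c. S *v v = c *\<^sub>R v)"
proof -
  have "span E \<subset> span UNIV" using ne by auto
  then obtain x0 where x0: "x0 \<noteq> 0" "\<And>y. y \<in> span E \<Longrightarrow> orthogonal x0 y"
    using orthogonal_to_subspace_exists_gen[of E UNIV] by blast
  define K where "K = {v::real^'n. (\<forall>e\<in>E. v \<bullet> e = 0) \<and> norm v = 1}"
  have x1: "x0 /\<^sub>R norm x0 \<in> K" unfolding K_def using x0 span_base
    by (auto simp: orthogonal_def)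
  have "closed K"
  proof -
    have "K = (\<Inter>e\<in>E. {v. e \<bullet> v = 0}) \<inter> {v. norm v = 1}"
      unfolding K_def by (auto simp: inner_commute)
    moreover have "closed {v::real^'n. norm v = 1}"
      by (rule closed_Collect_eq) (auto intro: continuous_intros)
    ultimately show ?thesis by (auto intro!: closed_Int closed_INT closed_hyperplane)
  qed
  moreover have "bounded K" unfolding K_def bounded_iff by auto
  ultimately have "compact K" by (simp add: compact_eq_bounded_closed)
  moreover have "continuous_on K (\<lambda>v. v \<bullet> (S *v v))"
    by (intro continuous_intros)
  ultimately obtain v0 where v0K: "v0 \<in> K" and v0max: "\<forall>y\<in>K. y \<bullet> (S *v y) \<le> v0 \<bullet> (S *v v0)"
    using continuous_attains_sup[of K "\<lambda>v. v \<bullet> (S *v v)"] x1 by blast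
  define c where "c = v0 \<bullet> (S *v v0)"
  have orthV: "\<forall>e\<in>E. v0 \<bullet> e = 0" and nv0: "norm v0 = 1" using v0K unfolding K_def by auto
  have v0v0: "v0 \<bullet> v0 = 1" using nv0 by (simp add: norm_eq_sqrt_inner)
  have ray: "y \<bullet> (S *v y) \<le> c * (y \<bullet> y)" if y: "\<forall>e\<in>E. y \<bullet> e = 0" for y
  proof (cases "y = 0")
    case True then show ?thesis by simp
  next
    case False
    let ?z = "y /\<^sub>R norm y"
    have "?z \<in> K" unfolding K_def using y False by (auto simp: inner_commute)
    then have "?z \<bullet> (S *v ?z) \<le> c" using v0max unfolding c_def by blast
    moreover have "?z \<bullet> (S *v ?z) = (y \<bullet> (S *v y)) / (norm y)^2"
      by (simp add: matrix_vector_mult_scaleR power2_eq_square divide_inverse inverse_mult_distrib mult_ac)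
    moreover have "y \<bullet> y = (norm y)^2" by (simp add: power2_norm_eq_inner)
    moreover have "0 < (norm y)^2" using False by simp
    ultimately show ?thesis by (simp add: divide_le_eq mult.commute)
  qed
  define r where "r = S *v v0 - c *\<^sub>R v0"
  have rV: "\<forall>e\<in>E. r \<bullet> e = 0"
  proof
    fix e assume e: "e \<in> E"
    then obtain d where d: "S *v e = d *\<^sub>R e" using E by blast
    have "(S *v v0) \<bullet> e = v0 \<bullet> (S *v e)" using sym_inner[OF sym] .
    also have "\<dots> = d * (v0 \<bullet> e)" using d by simp
    finally show "r \<bullet> e = 0" unfolding r_def using orthV e by (simp add: inner_diff_left)
  qed
  have r0: "r = 0"
  proof (rule ccontr)
    assume "r \<noteq> 0"
    then have rr: "0 < r \<bullet> r" by simp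
    define Q where "Q = \<bar>r \<bullet> (S *v r) - c * (r \<bullet> r)\<bar>"
    define t where "t = (r \<bullet> r) / (Q + 1)"
    have Q0: "0 \<le> Q" unfolding Q_def by simp
    have t0: "0 < t" unfolding t_def using rr Q0 by simp
    have "\<forall>e\<in>E. (v0 + t *\<^sub>R r) \<bullet> e = 0" using orthV rV by (simp add: inner_add_left)
    then have ray1: "(v0 + t *\<^sub>R r) \<bullet> (S *v (v0 + t *\<^sub>R r)) \<le> c * ((v0 + t *\<^sub>R r) \<bullet> (v0 + t *\<^sub>R r))"
      by (rule ray)
    define a where "a = r \<bullet> (S *v v0)"
    define b where "b = r \<bullet> v0"
    define X where "X = r \<bullet> (S *v r)"
    define R where "R = r \<bullet> r"
    have e1: "(v0 + t *\<^sub>R r) \<bullet> (S *v (v0 + t *\<^sub>R r)) = c + 2 * t * a + t^2 * X"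
    proof -
      have sy: "v0 \<bullet> (S *v r) = r \<bullet> (S *v v0)" using sym_inner[OF sym, of r v0] by (simp add: inner_commute)
      have "S *v (v0 + t *\<^sub>R r) = S *v v0 + t *\<^sub>R (S *v r)"
        by (simp add: matrix_vector_right_distrib matrix_vector_mult_scaleR)
      then have "(v0 + t *\<^sub>R r) \<bullet> (S *v (v0 + t *\<^sub>R r)) =
          v0 \<bullet> (S *v v0) + t * (v0 \<bullet> (S *v r)) + t * (r \<bullet> (S *v v0)) + t * (t * (r \<bullet> (S *v r)))"
        by (simp add: inner_add_left inner_add_right distrib_left)
      then show ?thesis unfolding a_def X_def c_def sy by (simp add: power2_eq_square)
    qed
    have e2: "(v0 + t *\<^sub>R r) \<bullet> (v0 + t *\<^sub>R r) = 1 + 2 * t * b + t^2 * R"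
    proof -
      have "(v0 + t *\<^sub>R r) \<bullet> (v0 + t *\<^sub>R r) = v0 \<bullet> v0 + t * (v0 \<bullet> r) + t * (r \<bullet> v0) + t * (t * (r \<bullet> r))"
        by (simp add: inner_add_left inner_add_right distrib_left)
      then show ?thesis using v0v0 unfolding b_def R_def by (simp add: power2_eq_square inner_commute)
    qed
    have e3: "a = R + c * b"
      unfolding r_def a_def R_def b_def using v0v0
      by (simp add: inner_diff_left inner_diff_right inner_commute c_def[symmetric] algebra_simps)
    have "c + 2 * t * (R + c * b) + t^2 * X \<le> c * (1 + 2 * t * b + t^2 * R)"
      using ray1 unfolding e1 e2 e3 .
    moreover have "c * (1 + 2 * t * b + t^2 * R) = c + 2 * t * (c * b) + t^2 * (c * R)"
      by (simp add: algebra_simps)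
    moreover have "2 * t * (R + c * b) = 2 * t * R + 2 * t * (c * b)" by (simp add: algebra_simps)
    moreover have "t^2 * (X - c * R) = t^2 * X - t^2 * (c * R)" by (simp add: algebra_simps)
    ultimately have "2 * t * (r \<bullet> r) + t^2 * (r \<bullet> (S *v r) - c * (r \<bullet> r)) \<le> 0"
      unfolding R_def[symmetric] X_def[symmetric] by linarith
    moreover have "- Q \<le> r \<bullet> (S *v r) - c * (r \<bullet> r)" unfolding Q_def by simp
    then have "t^2 * (- Q) \<le> t^2 * (r \<bullet> (S *v r) - c * (r \<bullet> r))"
      by (intro mult_left_mono) auto
    moreover have "t^2 * (- Q) = - (t^2 * Q)" by simp
    ultimately have "2 * t * (r \<bullet> r) - t^2 * Q \<le> 0" by linarith
    moreover have "t * (2 * (r \<bullet> r) - t * Q) = 2 * t * (r \<bullet> r) - t^2 * Q"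
      by (simp add: power2_eq_square right_diff_distrib)
    ultimately have "t * (2 * (r \<bullet> r) - t * Q) \<le> 0" by linarith
    then have "2 * (r \<bullet> r) - t * Q \<le> 0" using mult_le_cancel_left_pos[of t "2 * (r \<bullet> r) - t * Q" 0] t0 by simp
    moreover have "t * Q \<le> r \<bullet> r"
    proof -
      have "Q/(Q+1) \<le> 1" using Q0 by simp
      then have "(r \<bullet> r) * (Q/(Q+1)) \<le> r \<bullet> r" using rr by (intro mult_left_le) auto
      moreover have "t * Q = (r \<bullet> r) * (Q/(Q+1))" unfolding t_def by simp
      ultimately show ?thesis by simp
    qed
    ultimately show False using rr by simp
  qed
  then have "S *v v0 = c *\<^sub>R v0" unfolding r_def by simp
  then show ?thesis using nv0 orthV by blast
qed

lemma spectral: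
  fixes S :: "real^'n^'n"
  assumes sym: "transpose S = S"
  shows "\<exists>E. finite E \<and> (\<forall>e\<in>E. norm e = 1 \<and> (\<exists>c. S *v e = c *\<^sub>R e)) \<and> pairwise orthogonal E \<and> span E = UNIV"
proof -
  have claim: "\<exists>E. finite E \<and> (\<forall>e\<in>E. norm e = 1 \<and> (\<exists>c. S *v e = c *\<^sub>R e)) \<and> pairwise orthogonal E
      \<and> (span E = UNIV \<or> k \<le> card E)" for k
  proof (induction k)
    case 0
    show ?case by (rule exI[of _ "{}"]) simp
  next
    case (Suc k)
    then obtain E where E: "finite E" "\<forall>e\<in>E. norm e = 1 \<and> (\<exists>c. S *v e = c *\<^sub>R e)" "pairwise orthogonal E"
      "span E = UNIV \<or> k \<le> card E" by blast
    show ?case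
    proof (cases "span E = UNIV")
      case True then show ?thesis using E by blast
    next
      case False
      then obtain v where v: "norm v = 1" "\<forall>e\<in>E. v \<bullet> e = 0" "\<exists>c. S *v v = c *\<^sub>R v"
      proof -
        have "\<forall>e\<in>E. \<exists>c. S *v e = c *\<^sub>R e" using E(2) by blast
        from eig_extend[OF sym this False] show ?thesis using that by blast
      qed
      have vE: "v \<notin> E"
      proof
        assume "v \<in> E"
        then have "v \<bullet> v = 0" using v(2) by blast
        moreover have "v \<bullet> v = 1" using v(1) by (simp add: norm_eq_1)
        ultimately show False by simp
      qed
      have "pairwise orthogonal (insert v E)" using E(3) v(2)
        by (auto simp: pairwise_insert orthogonal_def inner_commute)
      moreover have "card (insert v E) = Suc (card E)" using E(1) vE by simp
      moreover have "k \<le> card E" using E(4) False by blast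
      moreover have "finite (insert v E)" using E(1) by blast
      moreover have "\<forall>e\<in>insert v E. norm e = 1 \<and> (\<exists>c. S *v e = c *\<^sub>R e)" using E(2) v(1,3) by blast
      ultimately have "Suc k \<le> card (insert v E)" by simp
      then show ?thesis using \<open>finite (insert v E)\<close> \<open>pairwise orthogonal (insert v E)\<close>
        \<open>\<forall>e\<in>insert v E. norm e = 1 \<and> (\<exists>c. S *v e = c *\<^sub>R e)\<close> by blast
    qed
  qed
  obtain E where E: "finite E" "\<forall>e\<in>E. norm e = 1 \<and> (\<exists>c. S *v e = c *\<^sub>R e)" "pairwise orthogonal E"
      "span E = UNIV \<or> Suc DIM(real^'n) \<le> card E" using claim[of "Suc DIM(real^'n)"] by blast
  have "0 \<notin> E" using E(2) by (metis norm_zero zero_neq_one)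
  then have "independent E" by (rule pairwise_orthogonal_independent[OF E(3)])
  then have "card E \<le> DIM(real^'n)" using independent_bound by blast
  then have "\<not> Suc DIM(real^'n) \<le> card E" by simp
  then have "span E = UNIV" using E(4) by blast
  then show ?thesis using E(1,2,3) by blast
qed



definition onb :: "(real^'n) set \<Rightarrow> bool" where
  "onb E \<longleftrightarrow> finite E \<and> (\<forall>e\<in>E. norm e = 1) \<and> pairwise orthogonal E \<and> span E = UNIV"

lemma onb_inner_self: "onb E \<Longrightarrow> e \<in> E \<Longrightarrow> e \<bullet> e = 1"
  unfolding onb_def by (simp add: norm_eq_1)

lemma onb_inner_other: "onb E \<Longrightarrow> e \<in> E \<Longrightarrow> f \<in> E \<Longrightarrow> f \<noteq> e \<Longrightarrow> f \<bullet> e = 0"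
  unfolding onb_def pairwise_def orthogonal_def by blast

lemma onb_coord:
  assumes E: "onb E" and e: "e \<in> E"
  shows "(\<Sum>f\<in>E. a f *\<^sub>R f) \<bullet> e = a e"
proof -
  have fin: "finite E" using E unfolding onb_def by blast
  have "(\<Sum>f\<in>E. a f *\<^sub>R f) \<bullet> e = (\<Sum>f\<in>E. a f * (f \<bullet> e))"
    by (simp add: inner_sum_left)
  also have "\<dots> = (\<Sum>f\<in>E. if f = e then a e else 0)"
  proof (rule sum.cong)
    fix f assume f: "f \<in> E"
    show "a f * (f \<bullet> e) = (if f = e then a e else 0)"
    proof (cases "f = e")
      case True then show ?thesis using onb_inner_self[OF E e] by simp
    next
      case False
      then have "f \<bullet> e = 0" by (rule onb_inner_other[OF E e f])
      then show ?thesis using False by simp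
    qed
  qed simp
  also have "\<dots> = a e" using fin e by simp
  finally show ?thesis .
qed

lemma onb_expand:
  assumes E: "onb E"
  shows "v = (\<Sum>e\<in>E. (v \<bullet> e) *\<^sub>R e)"
proof -
  define w where "w = v - (\<Sum>e\<in>E. (v \<bullet> e) *\<^sub>R e)"
  have "\<forall>e\<in>E. w \<bullet> e = 0"
    unfolding w_def using onb_coord[OF E, of _ "\<lambda>e. v \<bullet> e"] by (simp add: inner_diff_left)
  then have "\<And>y. y \<in> E \<Longrightarrow> orthogonal w y" unfolding orthogonal_def by blast
  moreover have "w \<in> span E" using E unfolding onb_def by simp
  ultimately have "orthogonal w w" by (rule orthogonal_to_span[rotated])
  then have "w = 0" by (simp add: orthogonal_self)
  then show ?thesis unfolding w_def by simp
qed

lemma onb_zero: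
  assumes E: "onb E" and z: "\<forall>e\<in>E. v \<bullet> e = 0"
  shows "v = 0"
  using onb_expand[OF E, of v] z by simp

lemma onb_eq:
  assumes E: "onb E" and z: "\<forall>e\<in>E. v \<bullet> e = u \<bullet> e"
  shows "v = u"
proof -
  have "\<forall>e\<in>E. (v - u) \<bullet> e = 0" using z by (simp add: inner_diff_left)
  then have "v - u = 0" by (rule onb_zero[OF E])
  then show ?thesis by simp
qed

lemma onb_parseval:
  assumes E: "onb E"
  shows "u \<bullet> v = (\<Sum>e\<in>E. (u \<bullet> e) * (v \<bullet> e))"
proof -
  have "u \<bullet> v = u \<bullet> (\<Sum>e\<in>E. (v \<bullet> e) *\<^sub>R e)" using onb_expand[OF E, of v] by simp
  also have "\<dots> = (\<Sum>e\<in>E. (u \<bullet> e) * (v \<bullet> e))" by (simp add: inner_sum_right mult.commute)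
  finally show ?thesis .
qed

lemma onb_diag_coord:
  assumes E: "onb E" and P: "\<forall>e\<in>E. P *v e = p e *\<^sub>R e" and sym: "transpose P = P" and e: "e \<in> E"
  shows "(P *v v) \<bullet> e = p e * (v \<bullet> e)"
proof -
  have "(P *v v) \<bullet> e = v \<bullet> (P *v e)" by (rule sym_inner[OF sym])
  also have "\<dots> = p e * (v \<bullet> e)" using P e by simp
  finally show ?thesis .
qed

lemma onb_diag_form:
  assumes E: "onb E" and P: "\<forall>e\<in>E. P *v e = p e *\<^sub>R e" and sym: "transpose P = P"
  shows "u \<bullet> (P *v v) = (\<Sum>e\<in>E. p e * (u \<bullet> e) * (v \<bullet> e))"
proof -
  have "u \<bullet> (P *v v) = (\<Sum>e\<in>E. (u \<bullet> e) * ((P *v v) \<bullet> e))" by (rule onb_parseval[OF E])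
  also have "\<dots> = (\<Sum>e\<in>E. p e * (u \<bullet> e) * (v \<bullet> e))"
    using onb_diag_coord[OF E P sym] by (intro sum.cong) auto
  finally show ?thesis .
qed

lemma spectral_onb:
  fixes S :: "real^'n^'n"
  assumes sym: "transpose S = S"
  shows "\<exists>E s. onb E \<and> (\<forall>e\<in>E. S *v e = s e *\<^sub>R e)"
proof -
  obtain E where E: "finite E" "\<forall>e\<in>E. norm e = 1 \<and> (\<exists>c. S *v e = c *\<^sub>R e)" "pairwise orthogonal E" "span E = UNIV"
    using spectral[OF sym] by blast
  define s where "s e = (SOME c. S *v e = c *\<^sub>R e)" for e
  have "\<forall>e\<in>E. S *v e = s e *\<^sub>R e"
  proof
    fix e assume "e \<in> E"
    then have "\<exists>c. S *v e = c *\<^sub>R e" using E(2) by blast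
    then show "S *v e = s e *\<^sub>R e" unfolding s_def by (rule someI_ex)
  qed
  moreover have "onb E" unfolding onb_def using E by blast
  ultimately show ?thesis by blast
qed

lemma rho_bound:
  fixes S :: "real^'n^'n"
  assumes sym: "transpose S = S"
  shows "v \<bullet> (S *v v) \<le> rho S * (v \<bullet> v)"
proof -
  obtain E s where E: "onb E" and s: "\<forall>e\<in>E. S *v e = s e *\<^sub>R e" using spectral_onb[OF sym] by blast
  define Ev where "Ev = {c. \<exists>v. v \<noteq> 0 \<and> S *v v = c *\<^sub>R v}"
  have fin: "finite E" using E unfolding onb_def by blast
  have sub: "Ev \<subseteq> s ` E"
  proof
    fix c assume "c \<in> Ev"
    then obtain w where w: "w \<noteq> 0" "S *v w = c *\<^sub>R w" unfolding Ev_def by blast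
    have "\<exists>e\<in>E. w \<bullet> e \<noteq> 0"
    proof (rule ccontr)
      assume "\<not> ?thesis"
      then have "w = 0" using onb_zero[OF E] by blast
      then show False using w by simp
    qed
    then obtain e where e: "e \<in> E" "w \<bullet> e \<noteq> 0" by blast
    have "(S *v w) \<bullet> e = s e * (w \<bullet> e)" by (rule onb_diag_coord[OF E s sym e(1)])
    moreover have "(S *v w) \<bullet> e = c * (w \<bullet> e)" using w by simp
    ultimately have "c = s e" using e(2) by simp
    then show "c \<in> s ` E" using e(1) by blast
  qed
  then have finEv: "finite Ev" using fin finite_subset by blast
  have sle: "s e \<le> rho S" if e: "e \<in> E" for e
  proof -
    have "e \<noteq> 0" using E e unfolding onb_def by auto
    then have "s e \<in> Ev" unfolding Ev_def using s e by blast
    then show ?thesis unfolding rho_def Ev_def[symmetric] using finEv by simp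
  qed
  have "v \<bullet> (S *v v) = (\<Sum>e\<in>E. s e * (v \<bullet> e) * (v \<bullet> e))" by (rule onb_diag_form[OF E s sym])
  also have "\<dots> \<le> (\<Sum>e\<in>E. rho S * (v \<bullet> e) * (v \<bullet> e))"
  proof (rule sum_mono)
    fix e assume "e \<in> E"
    then have "s e \<le> rho S" by (rule sle)
    then have "s e * ((v \<bullet> e) * (v \<bullet> e)) \<le> rho S * ((v \<bullet> e) * (v \<bullet> e))"
      by (rule mult_right_mono) simp
    then show "s e * (v \<bullet> e) * (v \<bullet> e) \<le> rho S * (v \<bullet> e) * (v \<bullet> e)" by (simp add: mult.assoc)
  qed
  also have "\<dots> = rho S * (\<Sum>e\<in>E. (v \<bullet> e) * (v \<bullet> e))" by (simp add: sum_distrib_left mult.assoc)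
  also have "\<dots> = rho S * (v \<bullet> v)" using onb_parseval[OF E, of v v] by simp
  finally show ?thesis .
qed




lemma matvec_sum: "finite S \<Longrightarrow> (\<Sum>t\<in>S. P t) *v v = (\<Sum>t\<in>S. P t *v v)"
  by (induction S rule: finite_induct) (simp_all add: matrix_vector_mult_add_rdistrib)

lemma matvec_sum_right: "finite S \<Longrightarrow> P *v (\<Sum>t\<in>S. f t) = (\<Sum>t\<in>S. P *v f t)"
  by (induction S rule: finite_induct) (simp_all add: matrix_vector_right_distrib)

lemma onb_diag_expand:
  assumes E: "onb E" and P: "\<forall>e\<in>E. P *v e = p e *\<^sub>R e"
  shows "P *v v = (\<Sum>e\<in>E. (p e * (v \<bullet> e)) *\<^sub>R e)"
proof -
  have fin: "finite E" using E unfolding onb_def by blast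
  have "P *v v = P *v (\<Sum>e\<in>E. (v \<bullet> e) *\<^sub>R e)" using onb_expand[OF E, of v] by simp
  also have "\<dots> = (\<Sum>e\<in>E. P *v ((v \<bullet> e) *\<^sub>R e))" by (rule matvec_sum_right[OF fin])
  also have "\<dots> = (\<Sum>e\<in>E. (p e * (v \<bullet> e)) *\<^sub>R e)"
    using P by (intro sum.cong) (simp_all add: matrix_vector_mult_scaleR)
  finally show ?thesis .
qed

lemma onb_diag_coord2:
  assumes E: "onb E" and P: "\<forall>e\<in>E. P *v e = p e *\<^sub>R e" and e: "e \<in> E"
  shows "(P *v v) \<bullet> e = p e * (v \<bullet> e)"
  using onb_diag_expand[OF E P, of v] onb_coord[OF E e, of "\<lambda>e. p e * (v \<bullet> e)"] by simp

lemma onb_diag_form2: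
  assumes E: "onb E" and P: "\<forall>e\<in>E. P *v e = p e *\<^sub>R e"
  shows "u \<bullet> (P *v v) = (\<Sum>e\<in>E. p e * (u \<bullet> e) * (v \<bullet> e))"
proof -
  have "u \<bullet> (P *v v) = (\<Sum>e\<in>E. (u \<bullet> e) * ((P *v v) \<bullet> e))" by (rule onb_parseval[OF E])
  also have "\<dots> = (\<Sum>e\<in>E. p e * (u \<bullet> e) * (v \<bullet> e))"
    using onb_diag_coord2[OF E P] by (intro sum.cong) auto
  finally show ?thesis .
qed

lemma matpow_eig:
  assumes "W *v e = w *\<^sub>R e"
  shows "matpow W t *v e = (w^t) *\<^sub>R e"
proof (induction t)
  case 0 then show ?case by simp
next
  case (Suc t)
  have "matpow W (Suc t) *v e = matpow W t *v (W *v e)" by (simp add: matrix_vector_mul_assoc)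
  also have "\<dots> = (w^Suc t) *\<^sub>R e" using assms Suc by (simp add: matrix_vector_mult_scaleR)
  finally show ?case .
qed

lemma W_eig:
  fixes B :: "real^'n^'n"
  assumes "B *v e = b *\<^sub>R e"
  shows "(mat 1 - \<alpha> *\<^sub>R B) *v e = (1 - \<alpha> * b) *\<^sub>R e"
proof -
  have "(mat 1 - \<alpha> *\<^sub>R B) *v e = mat 1 *v e - (\<alpha> *\<^sub>R B) *v e"
    by (simp add: matrix_vector_mult_diff_rdistrib)
  also have "\<dots> = e - \<alpha> *\<^sub>R (B *v e)" by (simp add: scaleR_matrix_vector_assoc)
  also have "\<dots> = (1 - \<alpha> * b) *\<^sub>R e" using assms by (simp add: algebra_simps)
  finally show ?thesis .
qed

lemma C_eig:
  fixes B :: "real^'n^'n"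
  assumes "B *v e = b *\<^sub>R e"
  shows "Cmat \<alpha> B T *v e = (\<Sum>t<T. (1 - \<alpha> * b)^t) *\<^sub>R e"
  unfolding Cmat_def
  by (simp add: matvec_sum matpow_eig[OF W_eig[OF assms]] scaleR_sum_left)

lemma matrix_inv_props:
  fixes C :: "real^'n^'n"
  assumes "invertible C"
  shows "matrix_inv C ** C = mat 1" "C ** matrix_inv C = mat 1"
proof -
  obtain C' where "C ** C' = mat 1 \<and> C' ** C = mat 1" using assms unfolding invertible_def by blast
  then have "C ** matrix_inv C = mat 1 \<and> matrix_inv C ** C = mat 1"
    unfolding matrix_inv_def by (rule someI)
  then show "matrix_inv C ** C = mat 1" "C ** matrix_inv C = mat 1" by simp_all
qed

lemma M_struct:
  fixes B :: "real^'n^'n"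
  assumes E: "onb E" and b: "\<forall>e\<in>E. B *v e = b e *\<^sub>R e"
    and cpos: "\<forall>e\<in>E. 0 < (\<Sum>t<T. (1 - \<alpha> * b e)^t)"
  shows "invertible (Cmat \<alpha> B T)"
    and "\<forall>e\<in>E. Mmat \<alpha> B T *v e = ((1 - \<alpha> * b e)^T / (\<Sum>t<T. (1 - \<alpha> * b e)^t)) *\<^sub>R e"
proof -
  define c where "c e = (\<Sum>t<T. (1 - \<alpha> * b e)^t)" for e
  have Ce: "\<forall>e\<in>E. Cmat \<alpha> B T *v e = c e *\<^sub>R e" unfolding c_def using b C_eig by blast
  have "inj ((*v) (Cmat \<alpha> B T))"
  proof (rule injI)
    fix x y assume xy: "Cmat \<alpha> B T *v x = Cmat \<alpha> B T *v y"
    show "x = y"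
    proof (rule onb_eq[OF E], rule ballI)
      fix e assume e: "e \<in> E"
      have "c e * (x \<bullet> e) = c e * (y \<bullet> e)"
        using onb_diag_coord2[OF E Ce e, of x] onb_diag_coord2[OF E Ce e, of y] xy by metis
      moreover have "0 < c e" using cpos e unfolding c_def by blast
      then have "c e \<noteq> 0" by simp
      ultimately show "x \<bullet> e = y \<bullet> e" by simp
    qed
  qed
  then obtain C' where "C' ** Cmat \<alpha> B T = mat 1" using matrix_left_invertible_injective by blast
  then show inv: "invertible (Cmat \<alpha> B T)" using invertible_left_inverse by blast
  show "\<forall>e\<in>E. Mmat \<alpha> B T *v e = ((1 - \<alpha> * b e)^T / (\<Sum>t<T. (1 - \<alpha> * b e)^t)) *\<^sub>R e"
  proof
    fix e assume e: "e \<in> E"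
    let ?I = "matrix_inv (Cmat \<alpha> B T)"
    have "?I *v (Cmat \<alpha> B T *v e) = e"
      by (simp add: matrix_vector_mul_assoc matrix_inv_props(1)[OF inv])
    then have "c e *\<^sub>R (?I *v e) = e" using Ce e by (simp add: matrix_vector_mult_scaleR)
    moreover have "0 < c e" using cpos e unfolding c_def by blast
    ultimately have Ie: "?I *v e = (1 / c e) *\<^sub>R e"
      by (metis less_irrefl scaleR_scaleR divide_self_if times_divide_eq_left mult_1 scaleR_one)
    have "Mmat \<alpha> B T *v e = ?I *v (matpow (mat 1 - \<alpha> *\<^sub>R B) T *v e)"
      unfolding Mmat_def by (simp add: matrix_vector_mul_assoc)
    also have "\<dots> = ?I *v ((1 - \<alpha> * b e)^T *\<^sub>R e)"
      using matpow_eig[OF W_eig[of B e "b e" \<alpha>]] b e by simp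
    also have "\<dots> = ((1 - \<alpha> * b e)^T / c e) *\<^sub>R e" using Ie by (simp add: matrix_vector_mult_scaleR)
    finally show "Mmat \<alpha> B T *v e = ((1 - \<alpha> * b e)^T / (\<Sum>t<T. (1 - \<alpha> * b e)^t)) *\<^sub>R e"
      unfolding c_def .
  qed
qed

lemma flex_coord:
  fixes B :: "real^'n^'n"
  assumes sym: "transpose B = B" and E: "onb E" and b: "\<forall>e\<in>E. B *v e = b e *\<^sub>R e" and e: "e \<in> E"
  shows "flex_inner \<alpha> A B df xk lk t \<bullet> e = (1 - \<alpha> * b e)^t * (xk \<bullet> e)
           - \<alpha> * (\<Sum>s<t. (1 - \<alpha> * b e)^s) * ((grad df xk + transpose A *v lk) \<bullet> e)"
proof (induction t)
  case 0 then show ?case by simp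
next
  case (Suc t)
  let ?w = "1 - \<alpha> * b e" and ?G = "(grad df xk + transpose A *v lk) \<bullet> e"
  have Bc: "(B *v v) \<bullet> e = b e * (v \<bullet> e)" for v by (rule onb_diag_coord2[OF E b e])
  have "flex_inner \<alpha> A B df xk lk (Suc t) \<bullet> e =
      flex_inner \<alpha> A B df xk lk t \<bullet> e - \<alpha> * ?G - \<alpha> * (b e * (flex_inner \<alpha> A B df xk lk t \<bullet> e))"
    by (simp add: inner_diff_left inner_add_left Bc algebra_simps)
  also have "\<dots> = ?w * (flex_inner \<alpha> A B df xk lk t \<bullet> e) - \<alpha> * ?G" by (simp add: algebra_simps)
  also have "\<dots> = ?w^Suc t * (xk \<bullet> e) - \<alpha> * (1 + ?w * (\<Sum>s<t. ?w^s)) * ?G"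
    unfolding Suc by (simp add: algebra_simps)
  also have "1 + ?w * (\<Sum>s<t. ?w^s) = (\<Sum>s<Suc t. ?w^s)"
    by (subst sum.lessThan_Suc_shift) (simp add: sum_distrib_left)
  finally show ?case .
qed




lemma mvt_h:
  fixes g g' :: "real \<Rightarrow> real"
  assumes der: "\<And>t. (g has_real_derivative g' t) (at t)" and bnd: "\<And>t. m \<le> g' t \<and> g' t \<le> L"
    and mL: "m \<le> L"
  shows "\<exists>h. m \<le> h \<and> h \<le> L \<and> g a - g b = h * (a - b)"
proof (cases a b rule: linorder_cases)
  case less
  obtain z where "g a - g b = (a - b) * g' z"
    using MVT2[OF less, of g g'] der by (metis minus_diff_eq mult_minus_left)
  then show ?thesis using bnd[of z] by (metis mult.commute)
next
  case equal then show ?thesis using mL by auto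
next
  case greater
  obtain z where "g a - g b = (a - b) * g' z"
    using MVT2[OF greater, of g g'] der by metis
  then show ?thesis using bnd[of z] by (metis mult.commute)
qed

lemma young_coord:
  fixes m h L \<eta> y u :: real
  assumes "m \<le> h" "h \<le> L" "0 < m" "0 < \<eta>"
  shows "(2*m - \<eta>)*y^2 - (L^2/\<eta>)*u^2 \<le> 2*y*(h*(y - u))"
proof -
  have h0: "0 < h" using assms by simp
  have "0 \<le> (\<eta>*y - h*u)^2" by simp
  then have "2*h*y*u*\<eta> \<le> \<eta>*(\<eta>*y^2) + h^2*u^2" by (simp add: power2_eq_square algebra_simps)
  then have "2*h*y*u*\<eta> \<le> \<eta>*(\<eta>*y^2) + L^2*u^2"
    using power_mono[of h L 2] h0 assms(2) mult_right_mono[of "h^2" "L^2" "u^2"] by simp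
  then have "2*h*y*u \<le> \<eta>*y^2 + (L^2/\<eta>)*u^2" using assms(4)
    by (simp add: field_simps)
  moreover have "2*m*y^2 \<le> 2*h*y^2" using assms(1) by (simp add: mult_right_mono)
  ultimately show ?thesis by (simp add: algebra_simps power2_eq_square)
qed

lemma inner_transpose: "(A *v x) \<bullet> y = x \<bullet> (transpose A *v y)" for A :: "real^'n^'m"
  by (metis dot_lmul_matrix vector_transpose_matrix)

lemma energy:
  fixes M B :: "real^'n^'n" and A :: "real^'n^'e" and e0 e1 d :: "real^'n" and \<mu>0 \<mu>1 :: "real^'e"
  assumes I: "M *v (e1 - e0) + \<alpha> *\<^sub>R (B *v e1) + \<alpha> *\<^sub>R (d + transpose A *v \<mu>0) = 0"
    and mu: "\<mu>1 = \<mu>0 + \<beta> *\<^sub>R (A *v e1)"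
    and Msym: "\<forall>u v. u \<bullet> (M *v v) = v \<bullet> (M *v u)" and b0: "0 < \<beta>"
  shows "(e1 \<bullet> (M *v e1) + (\<alpha>/\<beta>) * (\<mu>1 \<bullet> \<mu>1)) - (e0 \<bullet> (M *v e0) + (\<alpha>/\<beta>) * (\<mu>0 \<bullet> \<mu>0))
       = - ((e1 - e0) \<bullet> (M *v (e1 - e0))) - 2*\<alpha>*(e1 \<bullet> (B *v e1)) + \<alpha>*\<beta>*((A *v e1) \<bullet> (A *v e1))
         - 2*\<alpha>*(e1 \<bullet> d)"
proof -
  define u where "u = e1 - e0"
  have e0u: "e0 = e1 - u" unfolding u_def by simp
  have "e1 \<bullet> (M *v u + \<alpha> *\<^sub>R (B *v e1) + \<alpha> *\<^sub>R (d + transpose A *v \<mu>0)) = 0"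
    using I unfolding u_def by simp
  then have I1: "e1 \<bullet> (M *v u) + \<alpha> * (e1 \<bullet> (B *v e1)) + \<alpha> * (e1 \<bullet> d) + \<alpha> * ((A *v e1) \<bullet> \<mu>0) = 0"
    by (simp add: inner_add_right inner_transpose algebra_simps)
  have Mexp: "e0 \<bullet> (M *v e0) = e1 \<bullet> (M *v e1) - 2 * (e1 \<bullet> (M *v u)) + u \<bullet> (M *v u)"
  proof -
    have "e0 \<bullet> (M *v e0) = e1 \<bullet> (M *v e1) - e1 \<bullet> (M *v u) - u \<bullet> (M *v e1) + u \<bullet> (M *v u)"
      unfolding e0u by (simp add: matrix_vector_mult_diff_distrib inner_diff_left inner_diff_right)
    moreover have "u \<bullet> (M *v e1) = e1 \<bullet> (M *v u)" using Msym by blast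
    ultimately show ?thesis by simp
  qed
  have muexp: "\<mu>1 \<bullet> \<mu>1 = \<mu>0 \<bullet> \<mu>0 + 2 * \<beta> * ((A *v e1) \<bullet> \<mu>0) + \<beta>^2 * ((A *v e1) \<bullet> (A *v e1))"
    unfolding mu by (simp add: inner_add_left inner_add_right inner_commute power2_eq_square algebra_simps)
  have "(\<alpha>/\<beta>) * (\<mu>1 \<bullet> \<mu>1) - (\<alpha>/\<beta>) * (\<mu>0 \<bullet> \<mu>0) = 2 * \<alpha> * ((A *v e1) \<bullet> \<mu>0) + \<alpha> * \<beta> * ((A *v e1) \<bullet> (A *v e1))"
    unfolding muexp using b0 by (simp add: field_simps power2_eq_square)
  then show ?thesis unfolding u_def[symmetric] using Mexp I1 by (simp add: algebra_simps)
qed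



lemma sum_coord_ineq:
  fixes e0 e1 d :: "real^'n"
  assumes dco: "\<forall>i. \<exists>h. m \<le> h \<and> h \<le> L \<and> d$i = h*(e0$i)" and m0: "0 < m" and \<eta>0: "0 < \<eta>"
  shows "(2*m - \<eta>)*(e1 \<bullet> e1) - (L^2/\<eta>)*((e1-e0) \<bullet> (e1-e0)) \<le> 2*(e1 \<bullet> d)"
proof -
  have ci: "(2*m - \<eta>)*(e1$i)^2 - (L^2/\<eta>)*((e1-e0)$i)^2 \<le> 2*((e1$i)*(d$i))" for i
  proof -
    obtain h where h: "m \<le> h" "h \<le> L" "d$i = h*(e0$i)" using dco by blast
    have "e0$i = e1$i - (e1-e0)$i" by simp
    then have "d$i = h*(e1$i - (e1-e0)$i)" using h(3) by simp
    then show ?thesis using young_coord[OF h(1,2) m0 \<eta>0, of "e1$i" "(e1-e0)$i"] by simp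
  qed
  have "(2*m - \<eta>)*(e1 \<bullet> e1) - (L^2/\<eta>)*((e1-e0) \<bullet> (e1-e0))
      = (\<Sum>i\<in>UNIV. (2*m - \<eta>)*(e1$i)^2 - (L^2/\<eta>)*((e1-e0)$i)^2)"
    by (simp add: inner_vec_def sum_subtractf sum_distrib_left power2_eq_square)
  also have "\<dots> \<le> (\<Sum>i\<in>UNIV. 2*((e1$i)*(d$i)))" by (rule sum_mono) (rule ci)
  also have "\<dots> = 2*(e1 \<bullet> d)" by (simp add: inner_vec_def sum_distrib_left)
  finally show ?thesis .
qed

lemma decrease:
  fixes M B :: "real^'n^'n" and A :: "real^'n^'e" and e0 e1 d :: "real^'n" and \<mu>0 \<mu>1 :: "real^'e"
  assumes I: "M *v (e1 - e0) + \<alpha> *\<^sub>R (B *v e1) + \<alpha> *\<^sub>R (d + transpose A *v \<mu>0) = 0"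
    and mu: "\<mu>1 = \<mu>0 + \<beta> *\<^sub>R (A *v e1)"
    and Msym: "\<forall>u v. u \<bullet> (M *v v) = v \<bullet> (M *v u)" and b0: "0 < \<beta>" and a0: "0 < \<alpha>"
    and Mlow: "\<forall>v. \<kappa> * (v \<bullet> v) \<le> v \<bullet> (M *v v)"
    and Bpsd: "\<forall>v. 0 \<le> v \<bullet> (B *v v)"
    and Abnd: "\<forall>v. v \<bullet> ((transpose A ** A) *v v) \<le> \<rho>A * (v \<bullet> v)"
    and dco: "\<forall>i. \<exists>h. m \<le> h \<and> h \<le> L \<and> d$i = h*(e0$i)" and m0: "0 < m" and \<eta>0: "0 < \<eta>"
  shows "(\<kappa> - \<alpha>*L^2/\<eta>)*((e1-e0) \<bullet> (e1-e0)) + \<alpha>*(2*m - \<eta> - \<beta>*\<rho>A)*(e1 \<bullet> e1)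
     \<le> (e0 \<bullet> (M *v e0) + (\<alpha>/\<beta>) * (\<mu>0 \<bullet> \<mu>0)) - (e1 \<bullet> (M *v e1) + (\<alpha>/\<beta>) * (\<mu>1 \<bullet> \<mu>1))"
proof -
  let ?u = "e1 - e0"
  have en: "(e1 \<bullet> (M *v e1) + (\<alpha>/\<beta>) * (\<mu>1 \<bullet> \<mu>1)) - (e0 \<bullet> (M *v e0) + (\<alpha>/\<beta>) * (\<mu>0 \<bullet> \<mu>0))
       = - (?u \<bullet> (M *v ?u)) - 2*\<alpha>*(e1 \<bullet> (B *v e1)) + \<alpha>*\<beta>*((A *v e1) \<bullet> (A *v e1)) - 2*\<alpha>*(e1 \<bullet> d)"
    by (rule energy[OF I mu Msym b0])
  have Ae: "(A *v e1) \<bullet> (A *v e1) = e1 \<bullet> ((transpose A ** A) *v e1)"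
    by (simp add: inner_transpose matrix_vector_mul_assoc)
  have t1: "\<kappa> * (?u \<bullet> ?u) \<le> ?u \<bullet> (M *v ?u)" using Mlow by blast
  have t2: "0 \<le> e1 \<bullet> (B *v e1)" using Bpsd by blast
  have t3: "\<alpha>*\<beta>*((A *v e1) \<bullet> (A *v e1)) \<le> \<alpha>*\<beta>*(\<rho>A * (e1 \<bullet> e1))"
    unfolding Ae using Abnd a0 b0 by (intro mult_left_mono) auto
  have t4: "\<alpha>*((2*m - \<eta>)*(e1 \<bullet> e1) - (L^2/\<eta>)*(?u \<bullet> ?u)) \<le> \<alpha>*(2*(e1 \<bullet> d))"
    using sum_coord_ineq[OF dco m0 \<eta>0, of e1] a0 by (intro mult_left_mono) auto
  have t2': "0 \<le> 2*\<alpha>*(e1 \<bullet> (B *v e1))" using t2 a0 by simp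
  have eq1: "(\<kappa> - \<alpha>*L^2/\<eta>)*(?u \<bullet> ?u) + \<alpha>*(2*m - \<eta> - \<beta>*\<rho>A)*(e1 \<bullet> e1)
      = \<kappa> * (?u \<bullet> ?u) + \<alpha>*((2*m - \<eta>)*(e1 \<bullet> e1) - (L^2/\<eta>)*(?u \<bullet> ?u)) - \<alpha>*\<beta>*(\<rho>A * (e1 \<bullet> e1))"
    by (simp add: algebra_simps)
  have eq2: "\<alpha>*(2*(e1 \<bullet> d)) = 2*\<alpha>*(e1 \<bullet> d)" by simp
  show ?thesis using en t1 t2' t3 t4 eq1 eq2 by linarith
qed



lemma norm_d_bound:
  fixes e0 d :: "real^'n"
  assumes dco: "\<forall>i. \<exists>h. m \<le> h \<and> h \<le> L \<and> d$i = h*(e0$i)" and m0: "0 < m"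
  shows "norm d \<le> L * norm e0"
proof -
  have ci: "(d$i)^2 \<le> L^2 * (e0$i)^2" for i
  proof -
    obtain h where h: "m \<le> h" "h \<le> L" "d$i = h*(e0$i)" using dco by blast
    have "h^2 \<le> L^2" by (rule power_mono) (use h m0 in auto)
    then show ?thesis using h(3) by (simp add: power_mult_distrib mult_right_mono)
  qed
  have "(norm d)^2 = (\<Sum>i\<in>UNIV. (d$i)^2)" by (simp only: power2_norm_eq_inner) (simp add: inner_vec_def power2_eq_square)
  also have "\<dots> \<le> (\<Sum>i\<in>UNIV. L^2 * (e0$i)^2)" by (rule sum_mono) (rule ci)
  also have "\<dots> = L^2 * (norm e0)^2"
    by (simp only: power2_norm_eq_inner) (simp add: inner_vec_def power2_eq_square sum_distrib_left)
  also have "\<dots> = (L * norm e0)^2" by (simp add: power_mult_distrib)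
  finally have "(norm d)^2 \<le> (L * norm e0)^2" .
  moreover have "0 \<le> L"
  proof -
    obtain h where "m \<le> h" "h \<le> L" using dco by blast
    then show ?thesis using m0 by linarith
  qed
  ultimately show ?thesis using power2_le_imp_le[of "norm d" "L * norm e0"] by simp
qed

lemma bound_G1:
  fixes M B :: "real^'n^'n" and A :: "real^'n^'e" and e0 e1 d :: "real^'n" and \<mu>0 \<mu>1 :: "real^'e"
  assumes I: "M *v (e1 - e0) + \<alpha> *\<^sub>R (B *v e1) + \<alpha> *\<^sub>R (d + transpose A *v \<mu>0) = 0"
    and mu: "\<mu>1 = \<mu>0 + \<beta> *\<^sub>R (A *v e1)"
    and b0: "0 < \<beta>" and a0: "0 < \<alpha>"
    and KM: "\<forall>v. norm (M *v v) \<le> KM * norm v" and KB: "\<forall>v. norm (B *v v) \<le> KB * norm v"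
    and KA: "\<forall>v. norm (transpose A *v (A *v v)) \<le> KA * norm v"
    and KM0: "0 \<le> KM" and KB0: "0 \<le> KB" and KA0: "0 \<le> KA"
    and dco: "\<forall>i. \<exists>h. m \<le> h \<and> h \<le> L \<and> d$i = h*(e0$i)" and m0: "0 < m"
    and s0: "0 < \<sigma>" and sig: "\<sigma> * norm \<mu>1 \<le> norm (transpose A *v \<mu>1)"
  shows "e1 \<bullet> (M *v e1) + (\<alpha>/\<beta>) * (\<mu>1 \<bullet> \<mu>1)
     \<le> (KM + 2*\<alpha>*(KM/\<alpha> + 2*L + KB + \<beta>*KA)^2/(\<beta>*\<sigma>^2)) * ((e1-e0) \<bullet> (e1-e0) + e1 \<bullet> e1)"
proof -
  define u where "u = e1 - e0"
  define R where "R = KM/\<alpha> + 2*L + KB + \<beta>*KA"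
  have L0: "0 \<le> L"
  proof -
    obtain h where "m \<le> h" "h \<le> L" using dco by blast
    then show ?thesis using m0 by linarith
  qed
  have R0: "0 \<le> R" unfolding R_def using KM0 KB0 KA0 L0 a0 b0 by simp
  have nd: "norm d \<le> L * norm e0" by (rule norm_d_bound[OF dco m0])
  have ne0: "norm e0 \<le> norm e1 + norm u" unfolding u_def using norm_triangle_ineq4[of e1 "e1 - e0"] by simp
  define X where "X = transpose A *v \<mu>0"
  have At0: "transpose A *v \<mu>0 = - ((1/\<alpha>) *\<^sub>R (M *v u)) - B *v e1 - d"
  proof -
    have "M *v u + \<alpha> *\<^sub>R (B *v e1) + \<alpha> *\<^sub>R (d + X) = 0" using I unfolding u_def X_def .
    then have "\<alpha> *\<^sub>R X = - (M *v u) - \<alpha> *\<^sub>R (B *v e1) - \<alpha> *\<^sub>R d"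
      by (simp add: algebra_simps eq_neg_iff_add_eq_0)
    then have "(1/\<alpha>) *\<^sub>R (\<alpha> *\<^sub>R X) = (1/\<alpha>) *\<^sub>R (- (M *v u) - \<alpha> *\<^sub>R (B *v e1) - \<alpha> *\<^sub>R d)"
      by simp
    then have "X = - ((1/\<alpha>) *\<^sub>R (M *v u)) - B *v e1 - d" using a0
      by (simp add: scaleR_right_diff_distrib)
    then show ?thesis unfolding X_def .
  qed
  have At1: "transpose A *v \<mu>1 = - ((1/\<alpha>) *\<^sub>R (M *v u)) - B *v e1 - d + \<beta> *\<^sub>R (transpose A *v (A *v e1))"
    unfolding mu matrix_vector_right_distrib matrix_vector_mult_scaleR At0 by (rule refl)
  have "norm (transpose A *v \<mu>1) \<le> norm ((1/\<alpha>) *\<^sub>R (M *v u)) + norm (B *v e1) + norm d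
        + norm (\<beta> *\<^sub>R (transpose A *v (A *v e1)))"
  proof -
    let ?a = "(1/\<alpha>) *\<^sub>R (M *v u)" and ?b = "B *v e1" and ?c = d and ?d = "\<beta> *\<^sub>R (transpose A *v (A *v e1))"
    have "norm (- ?a - ?b - ?c + ?d) \<le> norm (- ?a - ?b - ?c) + norm ?d" by (rule norm_triangle_ineq)
    moreover have "norm (- ?a - ?b - ?c) \<le> norm (- ?a - ?b) + norm ?c" by (rule norm_triangle_ineq4)
    moreover have "norm (- ?a - ?b) \<le> norm (- ?a) + norm ?b" by (rule norm_triangle_ineq4)
    moreover have "norm (- ?a) = norm ?a" by (rule norm_minus_cancel)
    ultimately show ?thesis unfolding At1 by linarith
  qed
  also have "\<dots> \<le> (KM/\<alpha>) * norm u + KB * norm e1 + L * (norm e1 + norm u) + \<beta> * KA * norm e1"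
  proof -
    have "norm ((1/\<alpha>) *\<^sub>R (M *v u)) \<le> (KM/\<alpha>) * norm u"
      using KM a0 by (simp add: divide_right_mono)
    moreover have "norm (B *v e1) \<le> KB * norm e1" using KB by blast
    moreover have "norm d \<le> L * (norm e1 + norm u)" using nd ne0 L0
      by (meson mult_left_mono order_trans)
    moreover have "norm (\<beta> *\<^sub>R (transpose A *v (A *v e1))) \<le> \<beta> * KA * norm e1"
      using KA b0 by (simp add: mult.assoc mult_left_mono)
    ultimately show ?thesis by linarith
  qed
  also have "\<dots> \<le> R * (norm u + norm e1)"
  proof -
    have eq: "R * (norm u + norm e1) = (KM/\<alpha>) * norm u + KB * norm e1 + L * (norm e1 + norm u) + \<beta> * KA * norm e1
       + (KB * norm u + L * norm e1 + L * norm u + \<beta> * KA * norm u + (KM/\<alpha>) * norm e1)"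
      unfolding R_def by (simp add: algebra_simps)
    have "0 \<le> KB * norm u" "0 \<le> L * norm e1" "0 \<le> L * norm u" "0 \<le> \<beta> * KA * norm u" "0 \<le> (KM/\<alpha>) * norm e1"
      using KB0 L0 b0 KA0 KM0 a0 by simp_all
    then show ?thesis unfolding eq by linarith
  qed
  finally have "\<sigma> * norm \<mu>1 \<le> R * (norm u + norm e1)" using sig by linarith
  then have "(\<sigma> * norm \<mu>1)^2 \<le> (R * (norm u + norm e1))^2" by (rule power_mono) (use s0 in simp)
  also have "\<dots> \<le> R^2 * (2 * ((norm u)^2 + (norm e1)^2))"
  proof -
    have "(norm u + norm e1)^2 \<le> 2 * ((norm u)^2 + (norm e1)^2)"
      using sum_squares_bound[of "norm u" "norm e1"] by (simp add: power2_eq_square algebra_simps)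
    then show ?thesis by (simp add: power_mult_distrib mult_left_mono)
  qed
  finally have "\<sigma>^2 * (\<mu>1 \<bullet> \<mu>1) \<le> R^2 * (2 * (u \<bullet> u + e1 \<bullet> e1))"
    by (simp add: power_mult_distrib power2_norm_eq_inner)
  then have mub: "\<mu>1 \<bullet> \<mu>1 \<le> 2 * R^2 / \<sigma>^2 * (u \<bullet> u + e1 \<bullet> e1)" using s0
    by (simp add: field_simps)
  have "e1 \<bullet> (M *v e1) \<le> norm e1 * norm (M *v e1)" by (rule norm_cauchy_schwarz)
  also have "\<dots> \<le> norm e1 * (KM * norm e1)" using KM by (simp add: mult_left_mono)
  also have "\<dots> = KM * (e1 \<bullet> e1)" by (simp add: power2_norm_eq_inner[symmetric] power2_eq_square)
  also have "\<dots> \<le> KM * (u \<bullet> u + e1 \<bullet> e1)" using KM0 by (simp add: mult_left_mono)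
  finally have Mb: "e1 \<bullet> (M *v e1) \<le> KM * (u \<bullet> u + e1 \<bullet> e1)" .
  have "(\<alpha>/\<beta>) * (\<mu>1 \<bullet> \<mu>1) \<le> (\<alpha>/\<beta>) * (2 * R^2 / \<sigma>^2 * (u \<bullet> u + e1 \<bullet> e1))"
    using mub a0 b0 by (intro mult_left_mono) auto
  also have "\<dots> = 2*\<alpha>*R^2/(\<beta>*\<sigma>^2) * (u \<bullet> u + e1 \<bullet> e1)" by (simp add: field_simps)
  finally have "(\<alpha>/\<beta>) * (\<mu>1 \<bullet> \<mu>1) \<le> 2*\<alpha>*R^2/(\<beta>*\<sigma>^2) * (u \<bullet> u + e1 \<bullet> e1)" .
  then show ?thesis using Mb unfolding u_def[symmetric] R_def[symmetric] by (simp add: algebra_simps)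
qed



lemma sigma_exists:
  fixes A :: "real^'n^'e"
  shows "\<exists>\<sigma>>0. \<forall>\<mu>\<in>range ((*v) A). \<sigma> * norm \<mu> \<le> norm (transpose A *v \<mu>)"
proof -
  have sub: "subspace (range ((*v) A))"
    by (rule linear_subspace_image) (simp_all add: matrix_vector_mul_linear)
  have "closed (range ((*v) A))" by (rule closed_subspace[OF sub])
  moreover have "bounded_linear ((*v) (transpose A))" by simp
  moreover have "\<forall>\<mu>\<in>range ((*v) A). transpose A *v \<mu> = 0 \<longrightarrow> \<mu> = 0"
  proof (intro ballI impI)
    fix \<mu> assume "\<mu> \<in> range ((*v) A)" and z: "transpose A *v \<mu> = 0"
    then obtain v where v: "\<mu> = A *v v" by blast
    have "\<mu> \<bullet> \<mu> = v \<bullet> (transpose A *v \<mu>)" unfolding v by (rule inner_transpose)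
    then show "\<mu> = 0" using z by simp
  qed
  ultimately obtain e where "e > 0" "\<forall>x\<in>range ((*v) A). e * norm x \<le> norm (transpose A *v x)"
    using injective_imp_isometric[OF _ sub, of "(*v) (transpose A)"] by blast
  then show ?thesis by blast
qed

lemma rho_pos_B:
  fixes B :: "real^'n^'n"
  assumes E: "onb E" and bE: "\<forall>e\<in>E. B *v e = b e *\<^sub>R e" and bnn: "\<forall>e\<in>E. 0 \<le> b e"
    and ble: "\<forall>e\<in>E. b e \<le> R"
  shows "0 \<le> R"
proof -
  have "E \<noteq> {}"
  proof
    assume "E = {}"
    then have "(1::real^'n) = 0" using onb_expand[OF E, of 1] by simp
    then show False by (metis one_index zero_index zero_neq_one)
  qed
  then obtain e where "e \<in> E" by blast
  then show ?thesis using bnn ble by (meson order_trans)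
qed



theorem theorem3p18:
  fixes A :: "real^'n^'e" and B :: "real^'n^'n"
    and f df d2f :: "'n \<Rightarrow> real \<Rightarrow> real"
    and m L \<alpha> \<beta> \<eta>4 :: real and T :: nat
    and x :: "nat \<Rightarrow> real^'n" and lam :: "nat \<Rightarrow> real^'e"
    and xs :: "real^'n" and ls :: "real^'e"
  assumes inc: "incidence_matrix A" and conn: "graph_connected A"
    and B_sym: "transpose B = B"
    and B_psd: "\<forall>v. 0 \<le> v \<bullet> (B *v v)"
    and B_null: "{v. B *v v = 0} = {v. A *v v = 0}"
    and B_edges: "\<forall>i j. i \<noteq> j \<and> B$i$j \<noteq> 0 \<longrightarrow> adjacent A i j"
    and mL: "0 < m" "m \<le> L"
    and df: "\<And>i t. (f i has_real_derivative df i t) (at t)"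
    and d2f: "\<And>i t. (df i has_real_derivative d2f i t) (at t)"
    and d2f_bnd: "\<And>i t. m \<le> d2f i t \<and> d2f i t \<le> L"
    and xs_feas: "A *v xs = 0"
    and xs_min: "\<forall>y. A *v y = 0 \<longrightarrow> (\<Sum>i\<in>UNIV. f i (xs$i)) \<le> (\<Sum>i\<in>UNIV. f i (y$i))"
    and xs_unique: "\<forall>y. A *v y = 0 \<and> (\<forall>z. A *v z = 0 \<longrightarrow> (\<Sum>i\<in>UNIV. f i (y$i)) \<le> (\<Sum>i\<in>UNIV. f i (z$i))) \<longrightarrow> y = xs"
    and ls_KKT: "grad df xs + transpose A *v ls = 0"
    and xs_B: "B *v xs = 0"
    and ls_col: "ls \<in> range (\<lambda>v. A *v v)"
    and T: "1 \<le> T" and \<alpha>: "0 < \<alpha>"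
    and \<eta>4: "0 < \<eta>4" "\<eta>4 < 2 * m"
    and \<beta>: "0 < \<beta>" "\<beta> < (2 * m - \<eta>4) / rho (transpose A ** A)"
    and \<alpha>_bnd: "\<alpha> < (1 - (L\<^sup>2 / (L\<^sup>2 + \<eta>4 * rho B)) powr (1 / real T)) / rho B"
    and lam0: "lam 0 = 0"
    and x_step: "\<And>k. x (Suc k) = flex_inner \<alpha> A B df (x k) (lam k) T"
    and lam_step: "\<And>k. lam (Suc k) = lam k + \<beta> *\<^sub>R (A *v x (Suc k))"
  shows "\<exists>\<delta>>0.
           (\<forall>k. GC_normsq \<alpha> \<beta> B T (x (Suc k) - xs) (lam (Suc k) - ls)
                  \<le> 1 / (1 + \<delta>) * GC_normsq \<alpha> \<beta> B T (x k - xs) (lam k - ls))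
         \<and> (\<exists>c q. 0 \<le> q \<and> q < 1 \<and>
              (\<forall>k. sqrt ((x k - xs) \<bullet> (Mmat \<alpha> B T *v (x k - xs))) \<le> c * q ^ k))"
proof -
  have L0: "0 < L" using mL by linarith
  define \<rho>B where "\<rho>B = rho B"
  define \<rho>A where "\<rho>A = rho (transpose A ** A)"
  define M where "M = Mmat \<alpha> B T"
  have AAsym: "transpose (transpose A ** A) = transpose A ** A" by (simp add: matrix_transpose_mul)
  have Abnd: "\<forall>v. v \<bullet> ((transpose A ** A) *v v) \<le> \<rho>A * (v \<bullet> v)"
    unfolding \<rho>A_def using rho_bound[OF AAsym] by blast
  have Bbnd: "\<forall>v. v \<bullet> (B *v v) \<le> \<rho>B * (v \<bullet> v)" unfolding \<rho>B_def using rho_bound[OF B_sym] by blast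
  obtain E b where E: "onb E" and bE: "\<forall>e\<in>E. B *v e = b e *\<^sub>R e" using spectral_onb[OF B_sym] by blast
  have finE: "finite E" using E unfolding onb_def by blast
  have bnn: "\<forall>e\<in>E. 0 \<le> b e"
  proof
    fix e assume e: "e \<in> E"
    have "e \<bullet> (B *v e) = b e" using bE e onb_inner_self[OF E e] by simp
    then show "0 \<le> b e" using B_psd by metis
  qed
  have ble: "\<forall>e\<in>E. b e \<le> \<rho>B"
  proof
    fix e assume e: "e \<in> E"
    have "e \<bullet> (B *v e) = b e" using bE e onb_inner_self[OF E e] by simp
    moreover have "e \<bullet> (B *v e) \<le> \<rho>B * (e \<bullet> e)" using Bbnd by blast
    ultimately show "b e \<le> \<rho>B" using onb_inner_self[OF E e] by simp
  qed
  have \<rho>B0: "0 \<le> \<rho>B" by (rule rho_pos_B[OF E bE bnn ble])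
  have \<rho>Bpos: "0 < \<rho>B"
  proof (rule ccontr)
    assume "\<not> 0 < \<rho>B"
    then have "\<rho>B = 0" using \<rho>B0 by simp
    then show False using \<alpha>_bnd \<alpha> unfolding \<rho>B_def by simp
  qed
  have \<rho>Apos: "0 < \<rho>A"
  proof (rule ccontr)
    assume "\<not> 0 < \<rho>A"
    then have "(2 * m - \<eta>4) / \<rho>A \<le> 0" using \<eta>4 by (simp add: divide_nonneg_nonpos)
    then show False using \<beta> unfolding \<rho>A_def by simp
  qed
  have \<beta>\<rho>: "\<beta> * \<rho>A < 2 * m - \<eta>4" using \<beta>(2) \<rho>Apos unfolding \<rho>A_def by (simp add: pos_less_divide_eq)
  have a\<rho>: "\<alpha> * \<rho>B < 1"
  proof -
    have "\<alpha> * \<rho>B < 1 - (L\<^sup>2 / (L\<^sup>2 + \<eta>4 * rho B)) powr (1 / real T)"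
      using \<alpha>_bnd \<rho>Bpos unfolding \<rho>B_def by (simp add: pos_less_divide_eq)
    moreover have "0 \<le> (L\<^sup>2 / (L\<^sup>2 + \<eta>4 * rho B)) powr (1 / real T)" by simp
    ultimately show ?thesis by linarith
  qed
  define w where "w e = 1 - \<alpha> * b e" for e
  define c where "c e = (\<Sum>t<T. (w e)^t)" for e
  define mm where "mm e = (w e)^T / c e" for e
  have wpos: "\<forall>e\<in>E. 0 < w e"
  proof
    fix e assume e: "e \<in> E"
    have "\<alpha> * b e \<le> \<alpha> * \<rho>B" using ble e \<alpha> by (simp add: mult_left_mono)
    then show "0 < w e" unfolding w_def using a\<rho> by linarith
  qed
  have cpos: "\<forall>e\<in>E. 0 < c e"
  proof
    fix e assume e: "e \<in> E"
    have "0 \<in> {..<T}" using T by simp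
    then have "{..<T} \<noteq> {}" by blast
    then show "0 < c e" unfolding c_def using wpos e by (intro sum_pos) auto
  qed
  have cpos': "\<forall>e\<in>E. 0 < (\<Sum>t<T. (1 - \<alpha> * b e)^t)" using cpos unfolding c_def w_def by blast
  have Me: "\<forall>e\<in>E. M *v e = mm e *\<^sub>R e"
    using M_struct(2)[OF E bE cpos'] unfolding M_def mm_def c_def w_def by blast
  have key: "\<forall>e\<in>E. \<alpha> * L\<^sup>2 / \<eta>4 < mm e"
  proof
    fix e assume e: "e \<in> E"
    have "\<alpha> * L\<^sup>2 / \<eta>4 < (1 - \<alpha> * b e)^T / (\<Sum>t<T. (1 - \<alpha> * b e)^t)"
      by (rule scalar_key[OF \<alpha> \<rho>Bpos L0 \<eta>4(1) T]) (use bnn ble e \<alpha>_bnd in \<open>auto simp: \<rho>B_def\<close>)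
    then show "\<alpha> * L\<^sup>2 / \<eta>4 < mm e" unfolding mm_def c_def w_def .
  qed

  define \<epsilon>2 where "\<epsilon>2 = Min ((\<lambda>e. mm e - \<alpha> * L\<^sup>2 / \<eta>4) ` E)"
  have Ene: "E \<noteq> {}"
  proof
    assume "E = {}"
    then have "(1::real^'n) = 0" using onb_expand[OF E, of 1] by simp
    then show False by (metis one_index zero_index zero_neq_one)
  qed
  have \<epsilon>2pos: "0 < \<epsilon>2" unfolding \<epsilon>2_def using finE Ene key by (simp add: Min_gr_iff)
  have \<epsilon>2le: "\<forall>e\<in>E. \<epsilon>2 \<le> mm e - \<alpha> * L\<^sup>2 / \<eta>4" unfolding \<epsilon>2_def using finE by simp
  define \<kappa> where "\<kappa> = \<alpha> * L\<^sup>2 / \<eta>4 + \<epsilon>2"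
  have "0 \<le> \<alpha> * L\<^sup>2 / \<eta>4" using \<alpha> \<eta>4 by simp
  then have \<kappa>pos: "0 < \<kappa>" unfolding \<kappa>_def using \<epsilon>2pos by linarith
  have Mform: "\<forall>u v. u \<bullet> (M *v v) = (\<Sum>e\<in>E. mm e * (u \<bullet> e) * (v \<bullet> e))"
    using onb_diag_form2[OF E Me] by blast
  have Msym: "\<forall>u v. u \<bullet> (M *v v) = v \<bullet> (M *v u)"
    using Mform by (simp add: mult_ac)
  have Mlow: "\<forall>v. \<kappa> * (v \<bullet> v) \<le> v \<bullet> (M *v v)"
  proof
    fix v :: "real^'n"
    have "\<kappa> * (v \<bullet> v) = (\<Sum>e\<in>E. \<kappa> * (v \<bullet> e) * (v \<bullet> e))"
      using onb_parseval[OF E, of v v] by (simp add: sum_distrib_left mult.assoc)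
    also have "\<dots> \<le> (\<Sum>e\<in>E. mm e * (v \<bullet> e) * (v \<bullet> e))"
    proof (rule sum_mono)
      fix e assume e: "e \<in> E"
      have "\<kappa> \<le> mm e" using \<epsilon>2le e unfolding \<kappa>_def by force
      then have "\<kappa> * ((v \<bullet> e) * (v \<bullet> e)) \<le> mm e * ((v \<bullet> e) * (v \<bullet> e))"
        by (rule mult_right_mono) simp
      then show "\<kappa> * (v \<bullet> e) * (v \<bullet> e) \<le> mm e * (v \<bullet> e) * (v \<bullet> e)" by (simp add: mult.assoc)
    qed
    also have "\<dots> = v \<bullet> (M *v v)" using Mform by simp
    finally show "\<kappa> * (v \<bullet> v) \<le> v \<bullet> (M *v v)" .
  qed
  have Mnn: "\<forall>v. 0 \<le> v \<bullet> (M *v v)"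
  proof
    fix v :: "real^'n"
    have "0 \<le> \<kappa> * (v \<bullet> v)" using \<kappa>pos by simp
    then show "0 \<le> v \<bullet> (M *v v)" using Mlow by (meson order_trans)
  qed
  obtain KM where KM: "KM > 0" "\<forall>v. norm (M *v v) \<le> norm v * KM"
    using bounded_linear.pos_bounded[OF matrix_vector_mul_bounded_linear[of M]] by blast
  obtain KB where KB: "KB > 0" "\<forall>v. norm (B *v v) \<le> norm v * KB"
    using bounded_linear.pos_bounded[OF matrix_vector_mul_bounded_linear[of B]] by blast
  obtain KA where KA: "KA > 0" "\<forall>v. norm ((transpose A ** A) *v v) \<le> norm v * KA"
    using bounded_linear.pos_bounded[OF matrix_vector_mul_bounded_linear[of "transpose A ** A"]] by blast
  have KM': "\<forall>v. norm (M *v v) \<le> KM * norm v" using KM(2) by (simp add: mult.commute)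
  have KB': "\<forall>v. norm (B *v v) \<le> KB * norm v" using KB(2) by (simp add: mult.commute)
  have KA': "\<forall>v. norm (transpose A *v (A *v v)) \<le> KA * norm v"
    using KA(2) by (simp add: mult.commute matrix_vector_mul_assoc)
  obtain \<sigma> where \<sigma>: "\<sigma> > 0" "\<forall>\<mu>\<in>range ((*v) A). \<sigma> * norm \<mu> \<le> norm (transpose A *v \<mu>)"
    using sigma_exists[of A] by blast
  have lam_range: "lam k \<in> range ((*v) A)" for k
  proof (induction k)
    case 0 show ?case unfolding lam0 by (metis matrix_vector_mult_0_right rangeI)
  next
    case (Suc k)
    then obtain v where v: "lam k = A *v v" by blast
    have "lam (Suc k) = A *v (v + \<beta> *\<^sub>R x (Suc k))"
      unfolding lam_step v by (simp add: matrix_vector_right_distrib matrix_vector_mult_scaleR)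
    then show ?case by blast
  qed
  have mu_range: "lam k - ls \<in> range ((*v) A)" for k
  proof -
    obtain v where v: "lam k = A *v v" using lam_range[of k] by blast
    obtain v' where v': "ls = A *v v'" using ls_col by blast
    have "lam k - ls = A *v (v - v')" unfolding v v' by (simp add: matrix_vector_mult_diff_distrib)
    then show ?thesis by blast
  qed

  have KKT': "grad df xs = - (transpose A *v ls)"
    by (subst eq_neg_iff_add_eq_0) (rule ls_KKT)
  have stepI: "M *v (x (Suc k) - xs - (x k - xs)) + \<alpha> *\<^sub>R (B *v (x (Suc k) - xs))
      + \<alpha> *\<^sub>R ((grad df (x k) - grad df xs) + transpose A *v (lam k - ls)) = 0" for k
  proof -
    define g where "g = grad df (x k) + transpose A *v lam k"
    have gd: "(grad df (x k) - grad df xs) + transpose A *v (lam k - ls) = g"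
      unfolding g_def KKT' by (simp add: matrix_vector_mult_diff_distrib)
    show ?thesis unfolding gd
    proof (rule onb_zero[OF E], rule ballI)
      fix f assume f: "f \<in> E"
      have X1: "x (Suc k) \<bullet> f = (w f)^T * (x k \<bullet> f) - \<alpha> * c f * (g \<bullet> f)"
        unfolding x_step g_def w_def c_def by (rule flex_coord[OF B_sym E bE f])
      have bS: "b f * (xs \<bullet> f) = 0" using onb_diag_coord2[OF E bE f, of xs] xs_B by simp
      have Mc: "(M *v v) \<bullet> f = mm f * (v \<bullet> f)" for v by (rule onb_diag_coord2[OF E Me f])
      have Bc: "(B *v v) \<bullet> f = b f * (v \<bullet> f)" for v by (rule onb_diag_coord2[OF E bE f])
      have tele: "\<alpha> * b f * c f = 1 - (w f)^T"
        unfolding c_def using one_diff_power_eq[of "w f" T] by (simp add: w_def)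
      have cf: "0 < c f" using cpos f by blast
      have cmm: "c f * mm f = (w f)^T" using cf unfolding mm_def by simp
      have ex: "(M *v (x (Suc k) - xs - (x k - xs)) + \<alpha> *\<^sub>R (B *v (x (Suc k) - xs)) + \<alpha> *\<^sub>R g) \<bullet> f
          = mm f * ((x (Suc k) \<bullet> f) - (x k \<bullet> f)) + \<alpha> * (b f * (x (Suc k) \<bullet> f)) - \<alpha> * (b f * (xs \<bullet> f)) + \<alpha> * (g \<bullet> f)"
        by (simp add: inner_add_left inner_diff_left Mc Bc algebra_simps)
      define E1 where "E1 = mm f * ((x (Suc k) \<bullet> f) - (x k \<bullet> f)) + \<alpha> * (b f * (x (Suc k) \<bullet> f)) - \<alpha> * (b f * (xs \<bullet> f)) + \<alpha> * (g \<bullet> f)"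
      have "c f * E1 = (c f * mm f) * ((x (Suc k) \<bullet> f) - (x k \<bullet> f)) + (\<alpha> * b f * c f) * (x (Suc k) \<bullet> f)
           - \<alpha> * c f * (b f * (xs \<bullet> f)) + \<alpha> * c f * (g \<bullet> f)"
        unfolding E1_def by (simp add: algebra_simps)
      also have "\<dots> = (w f)^T * ((x (Suc k) \<bullet> f) - (x k \<bullet> f)) + (1 - (w f)^T) * (x (Suc k) \<bullet> f)
           + \<alpha> * c f * (g \<bullet> f)"
        unfolding cmm tele bS by simp
      also have "\<dots> = 0" unfolding X1 by (simp add: algebra_simps)
      finally have "E1 = 0" using cf by simp
      then show "(M *v (x (Suc k) - xs - (x k - xs)) + \<alpha> *\<^sub>R (B *v (x (Suc k) - xs)) + \<alpha> *\<^sub>R g) \<bullet> f = 0"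
        unfolding ex E1_def .
    qed
  qed
  have dco: "\<forall>i. \<exists>h. m \<le> h \<and> h \<le> L \<and> (grad df (x k) - grad df xs)$i = h * ((x k - xs)$i)" for k
  proof
    fix i
    obtain h where "m \<le> h" "h \<le> L" "df i (x k $ i) - df i (xs $ i) = h * (x k $ i - xs $ i)"
      using mvt_h[of "df i" "d2f i" m L "x k $ i" "xs $ i"] df d2f d2f_bnd mL by blast
    then show "\<exists>h. m \<le> h \<and> h \<le> L \<and> (grad df (x k) - grad df xs)$i = h * ((x k - xs)$i)"
      unfolding grad_def by auto
  qed
  define \<epsilon> where "\<epsilon> = min \<epsilon>2 (\<alpha> * (2 * m - \<eta>4 - \<beta> * \<rho>A))"
  define R where "R = KM/\<alpha> + 2*L + KB + \<beta>*KA"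
  define K where "K = KM + 2*\<alpha>*R^2/(\<beta>*\<sigma>^2)"
  define \<delta> where "\<delta> = \<epsilon> / K"
  have \<epsilon>pos: "0 < \<epsilon>" unfolding \<epsilon>_def using \<epsilon>2pos \<alpha> \<beta>\<rho> by simp
  have Kpos: "0 < K" unfolding K_def using KM(1) \<alpha> \<beta> \<sigma>(1) by (simp add: add_pos_nonneg)
  have \<delta>pos: "0 < \<delta>" unfolding \<delta>_def using \<epsilon>pos Kpos by simp
  have GC: "GC_normsq \<alpha> \<beta> B T v l = v \<bullet> (M *v v) + (\<alpha>/\<beta>) * (l \<bullet> l)" for v l
    unfolding GC_normsq_def M_def ..
  have step: "GC_normsq \<alpha> \<beta> B T (x (Suc k) - xs) (lam (Suc k) - ls)
      \<le> 1 / (1 + \<delta>) * GC_normsq \<alpha> \<beta> B T (x k - xs) (lam k - ls)" for k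
  proof -
    let ?e0 = "x k - xs" and ?e1 = "x (Suc k) - xs" and ?d = "grad df (x k) - grad df xs"
      and ?\<mu>0 = "lam k - ls" and ?\<mu>1 = "lam (Suc k) - ls"
    have I: "M *v (?e1 - ?e0) + \<alpha> *\<^sub>R (B *v ?e1) + \<alpha> *\<^sub>R (?d + transpose A *v ?\<mu>0) = 0"
      using stepI[of k] by simp
    have Ae1: "A *v ?e1 = A *v x (Suc k)" using xs_feas by (simp add: matrix_vector_mult_diff_distrib)
    have mu: "?\<mu>1 = ?\<mu>0 + \<beta> *\<^sub>R (A *v ?e1)" unfolding Ae1 lam_step by simp
    define G0 where "G0 = ?e0 \<bullet> (M *v ?e0) + (\<alpha>/\<beta>) * (?\<mu>0 \<bullet> ?\<mu>0)"
    define G1 where "G1 = ?e1 \<bullet> (M *v ?e1) + (\<alpha>/\<beta>) * (?\<mu>1 \<bullet> ?\<mu>1)"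
    define Nu where "Nu = (?e1 - ?e0) \<bullet> (?e1 - ?e0)"
    define Ne where "Ne = ?e1 \<bullet> ?e1"
    have dec: "(\<kappa> - \<alpha>*L^2/\<eta>4) * Nu + \<alpha>*(2*m - \<eta>4 - \<beta>*\<rho>A) * Ne \<le> G0 - G1"
      unfolding G0_def G1_def Nu_def Ne_def
      by (rule decrease[OF I mu Msym \<beta>(1) \<alpha> Mlow B_psd Abnd dco mL(1) \<eta>4(1)])
    have sig: "\<sigma> * norm ?\<mu>1 \<le> norm (transpose A *v ?\<mu>1)" using \<sigma>(2) mu_range[of "Suc k"] by blast
    have bnd: "G1 \<le> K * (Nu + Ne)"
      unfolding G1_def Nu_def Ne_def K_def R_def
      by (rule bound_G1[OF I mu \<beta>(1) \<alpha> KM' KB' KA' _ _ _ dco mL(1) \<sigma>(1) sig])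
         (use KM(1) KB(1) KA(1) in auto)
    have Nu0: "0 \<le> Nu" and Ne0: "0 \<le> Ne" unfolding Nu_def Ne_def by simp_all
    have c1: "\<epsilon> * Nu \<le> (\<kappa> - \<alpha>*L^2/\<eta>4) * Nu"
      using Nu0 unfolding \<epsilon>_def \<kappa>_def by (intro mult_right_mono) auto
    have c2: "\<epsilon> * Ne \<le> \<alpha>*(2*m - \<eta>4 - \<beta>*\<rho>A) * Ne"
      using Ne0 unfolding \<epsilon>_def by (intro mult_right_mono) auto
    have "\<epsilon> * (Nu + Ne) \<le> G0 - G1" using dec c1 c2 by (simp add: distrib_left)
    moreover have "\<delta> * G1 \<le> \<epsilon> * (Nu + Ne)"
    proof -
      have "\<delta> * G1 \<le> \<delta> * (K * (Nu + Ne))" using bnd \<delta>pos by (simp add: mult_left_mono)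
      also have "\<dots> = \<epsilon> * (Nu + Ne)" unfolding \<delta>_def using Kpos by simp
      finally show ?thesis .
    qed
    ultimately have "(1 + \<delta>) * G1 \<le> G0" by (simp add: algebra_simps)
    then have "G1 \<le> G0 / (1 + \<delta>)" using \<delta>pos by (simp add: pos_le_divide_eq mult.commute)
    then show ?thesis unfolding GC G0_def[symmetric] G1_def[symmetric] by simp
  qed
  define G where "G k = GC_normsq \<alpha> \<beta> B T (x k - xs) (lam k - ls)" for k
  define q where "q = 1 / (1 + \<delta>)"
  have q0: "0 \<le> q" and q1: "q < 1" unfolding q_def using \<delta>pos by simp_all
  have Gpow: "G k \<le> q^k * G 0" for k
  proof (induction k)
    case 0 show ?case by simp
  next
    case (Suc k)
    have "G (Suc k) \<le> q * G k" using step[of k] unfolding G_def q_def .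
    also have "\<dots> \<le> q * (q^k * G 0)" using Suc q0 by (rule mult_left_mono)
    finally show ?case by (simp add: mult.assoc)
  qed
  have Mpart: "(x k - xs) \<bullet> (Mmat \<alpha> B T *v (x k - xs)) \<le> G k" for k
  proof -
    have "0 \<le> (\<alpha>/\<beta>) * ((lam k - ls) \<bullet> (lam k - ls))" using \<alpha> \<beta> by simp
    then show ?thesis unfolding G_def GC M_def by simp
  qed
  have R: "\<exists>c q. 0 \<le> q \<and> q < 1 \<and>
              (\<forall>k. sqrt ((x k - xs) \<bullet> (Mmat \<alpha> B T *v (x k - xs))) \<le> c * q ^ k)"
  proof (intro exI conjI allI)
    show "0 \<le> sqrt q" using q0 by simp
    show "sqrt q < 1" using q1 by simp
    fix k
    have "sqrt ((x k - xs) \<bullet> (Mmat \<alpha> B T *v (x k - xs))) \<le> sqrt (q^k * G 0)"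
      using Mpart[of k] Gpow[of k] by simp
    also have "\<dots> = sqrt (G 0) * sqrt q ^ k" by (simp add: real_sqrt_mult real_sqrt_power mult.commute)
    finally show "sqrt ((x k - xs) \<bullet> (Mmat \<alpha> B T *v (x k - xs))) \<le> sqrt (G 0) * sqrt q ^ k" .
  qed
  show ?thesis using \<delta>pos step R by blast
qed


end
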